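(* Let $G$ be a finite group, $p$ a prime, and suppose $G'\not\subseteq Z(G)$ and one of the following holds: (a) $G'\cong C_{p^2}$ and $\gcd(p-1,|G|)=1$; (b) $G'\cong C_p\times C_p$ and $\gcd(p^2-1,|G|)=1$. Then $|G/C_G(G')|=|G'\cap Z(G)|=|\mathrm{Cl}_G(x)|=p$ for all $x\in G'\setminus Z(G)$.
   Context: $G'$ is the commutator subgroup, $Z(G)$ the center, $C_G(G')$ the centralizer of $G'$ in $G$, and $\mathrm{Cl}_G(x)$ the conjugacy class of $x$ in $G$. *)

theory Defs
  imports "HOL-Algebra.Algebra"
begin

definition group_center :: "('a, 'b) monoid_scheme \<Rightarrow> 'a set" where
  "group_center G = {z \<in> carrier G. \<forall>g \<in> carrier G. z \<otimes>\<^bsub>G\<^esub> g = g \<otimes>\<^bsub>G\<^esub> z}"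

definition centralizer :: "('a, 'b) monoid_scheme \<Rightarrow> 'a set \<Rightarrow> 'a set" where
  "centralizer G H = {g \<in> carrier G. \<forall>h \<in> H. g \<otimes>\<^bsub>G\<^esub> h = h \<otimes>\<^bsub>G\<^esub> g}"

definition conj_class :: "('a, 'b) monoid_scheme \<Rightarrow> 'a \<Rightarrow> 'a set" where
  "conj_class G x = {g \<otimes>\<^bsub>G\<^esub> x \<otimes>\<^bsub>G\<^esub> inv\<^bsub>G\<^esub> g | g. g \<in> carrier G}"

abbreviation commutator_subgroup :: "('a, 'b) monoid_scheme \<Rightarrow> 'a set" where
  "commutator_subgroup G \<equiv> derived G (carrier G)"

end

theory Submission
  imports Defs
begin
definition orb :: "('a, 'b) monoid_scheme \<Rightarrow> 'a set \<Rightarrow> 'a \<Rightarrow> 'a set" where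
  "orb G H y = {g \<otimes>\<^bsub>G\<^esub> y \<otimes>\<^bsub>G\<^esub> inv\<^bsub>G\<^esub> g | g. g \<in> H}"

definition stab :: "('a, 'b) monoid_scheme \<Rightarrow> 'a set \<Rightarrow> 'a \<Rightarrow> 'a set" where
  "stab G H y = {h \<in> H. h \<otimes>\<^bsub>G\<^esub> y = y \<otimes>\<^bsub>G\<^esub> h}"

definition fixs :: "('a, 'b) monoid_scheme \<Rightarrow> 'a set \<Rightarrow> 'a set \<Rightarrow> 'a set" where
  "fixs G H S = {y \<in> S. \<forall>h\<in>H. h \<otimes>\<^bsub>G\<^esub> y = y \<otimes>\<^bsub>G\<^esub> h}"

context group begin

lemma inv_cancel1 [simp]: "k \<in> carrier G \<Longrightarrow> y \<in> carrier G \<Longrightarrow> inv k \<otimes> (k \<otimes> y) = y"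
  by (simp add: m_assoc[symmetric])

lemma inv_cancel2 [simp]: "k \<in> carrier G \<Longrightarrow> y \<in> carrier G \<Longrightarrow> k \<otimes> (inv k \<otimes> y) = y"
  by (simp add: m_assoc[symmetric])

lemma sub_card_dvd:
  assumes "subgroup I G" "subgroup J G" "I \<subseteq> J"
  shows "card I dvd card J"
proof -
  interpret J: group "G\<lparr>carrier := J\<rparr>" using subgroup_imp_group[OF assms(2)] .
  have "subgroup I (G\<lparr>carrier := J\<rparr>)" using subgroup_incl assms by blast
  from J.lagrange[OF this] have "card (rcosets\<^bsub>G\<lparr>carrier := J\<rparr>\<^esub> I) * card I = card J" by (simp add: order_def)
  then show ?thesis by (metis dvd_triv_right)
qed

lemma comm_inv:
  assumes "g \<in> carrier G" "h \<in> carrier G" "g \<otimes> h = h \<otimes> g"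
  shows "inv g \<otimes> h = h \<otimes> inv g"
proof -
  have 1: "inv g \<otimes> (g \<otimes> h) \<otimes> inv g = h \<otimes> inv g" using assms(1,2) by (simp add: m_assoc[symmetric])
  have 2: "inv g \<otimes> h = inv g \<otimes> (h \<otimes> g) \<otimes> inv g" using assms(1,2) by (simp add: m_assoc)
  show ?thesis using 1 2 assms(3) by simp
qed

lemma fixs_subgroup:
  assumes "subgroup A G" "H \<subseteq> carrier G"
  shows "subgroup (fixs G H A) G"
proof (rule subgroupI)
  show "fixs G H A \<subseteq> carrier G" using subgroup.subset[OF assms(1)] by (auto simp: fixs_def)
  have "\<one> \<in> fixs G H A" using subgroup.one_closed[OF assms(1)] assms(2) by (auto simp: fixs_def)
  then show "fixs G H A \<noteq> {}" by blast
next
  fix a assume a: "a \<in> fixs G H A"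
  then have ac: "a \<in> carrier G" "a \<in> A" using subgroup.subset[OF assms(1)] by (auto simp: fixs_def)
  show "inv a \<in> fixs G H A"
  proof -
    have "h \<otimes> inv a = inv a \<otimes> h" if h: "h \<in> H" for h
    proof -
      have hc: "h \<in> carrier G" using h assms by auto
      have "a \<otimes> h = h \<otimes> a" using a h by (auto simp: fixs_def)
      then show ?thesis using comm_inv[OF ac(1) hc] by simp
    qed
    then show ?thesis using ac subgroup.m_inv_closed[OF assms(1)] by (auto simp: fixs_def)
  qed
next
  fix a b assume a: "a \<in> fixs G H A" and b: "b \<in> fixs G H A"
  then have ac: "a \<in> carrier G" "a \<in> A" "b \<in> carrier G" "b \<in> A" using subgroup.subset[OF assms(1)] by (auto simp: fixs_def)
  have "h \<otimes> (a \<otimes> b) = a \<otimes> b \<otimes> h" if h: "h \<in> H" for h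
  proof -
    have hc: "h \<in> carrier G" using h assms by auto
    have "h \<otimes> (a \<otimes> b) = (h \<otimes> a) \<otimes> b" using hc ac by (simp add: m_assoc)
    also have "\<dots> = a \<otimes> (h \<otimes> b)" using a h hc ac by (simp add: fixs_def m_assoc)
    also have "\<dots> = a \<otimes> b \<otimes> h" using b h hc ac by (simp add: fixs_def m_assoc)
    finally show ?thesis .
  qed
  then show "a \<otimes> b \<in> fixs G H A" using ac subgroup.m_closed[OF assms(1)] by (auto simp: fixs_def)
qed

lemma orb_self:
  assumes "subgroup H G" "y \<in> carrier G" shows "y \<in> orb G H y"
  unfolding orb_def using assms subgroup.one_closed by force

lemma orb_sub:
  assumes "subgroup H G" "y \<in> carrier G" shows "orb G H y \<subseteq> carrier G"
  unfolding orb_def using assms subgroup.subset by blast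

lemma orb_trans:
  assumes H: "subgroup H G" and y: "y \<in> carrier G" and z: "z \<in> orb G H y"
  shows "orb G H z = orb G H y"
proof -
  obtain k where k: "k \<in> H" "z = k \<otimes> y \<otimes> inv k" using z by (auto simp: orb_def)
  have kc: "k \<in> carrier G" using k H subgroup.subset by blast
  have 1: "orb G H z \<subseteq> orb G H y"
  proof
    fix w assume "w \<in> orb G H z"
    then obtain g where g: "g \<in> H" "w = g \<otimes> z \<otimes> inv g" by (auto simp: orb_def)
    have gc: "g \<in> carrier G" using g H subgroup.subset by blast
    have "inv (g \<otimes> k) = inv k \<otimes> inv g" using gc kc by (simp add: inv_mult_group)
    then have "w = (g \<otimes> k) \<otimes> y \<otimes> inv (g \<otimes> k)" using g(2) k(2) gc kc y by (simp add: m_assoc)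
    moreover have "g \<otimes> k \<in> H" by (rule subgroup.m_closed[OF H g(1) k(1)])
    ultimately show "w \<in> orb G H y" by (auto simp: orb_def)
  qed
  have yz: "y = inv k \<otimes> z \<otimes> inv (inv k)" using k kc y by (simp add: m_assoc)
  have 2: "orb G H y \<subseteq> orb G H z"
  proof
    fix w assume "w \<in> orb G H y"
    then obtain g where g: "g \<in> H" "w = g \<otimes> y \<otimes> inv g" by (auto simp: orb_def)
    have gc: "g \<in> carrier G" using g H subgroup.subset by blast
    have "inv (g \<otimes> inv k) = k \<otimes> inv g" using gc kc by (simp add: inv_mult_group)
    then have "w = (g \<otimes> inv k) \<otimes> z \<otimes> inv (g \<otimes> inv k)" using g(2) k(2) gc kc y by (simp add: m_assoc)
    moreover have "g \<otimes> inv k \<in> H" by (rule subgroup.m_closed[OF H g(1) subgroup.m_inv_closed[OF H k(1)]])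
    ultimately show "w \<in> orb G H z" by (auto simp: orb_def)
  qed
  from 1 2 show ?thesis by blast
qed

lemma orb_single_iff:
  assumes H: "subgroup H G" and y: "y \<in> carrier G"
  shows "orb G H y = {y} \<longleftrightarrow> (\<forall>h\<in>H. h \<otimes> y = y \<otimes> h)"
proof
  assume a: "orb G H y = {y}"
  show "\<forall>h\<in>H. h \<otimes> y = y \<otimes> h"
  proof
    fix h assume h: "h \<in> H"
    have hc: "h \<in> carrier G" using h H subgroup.subset by blast
    have "h \<otimes> y \<otimes> inv h = y" using a h by (auto simp: orb_def)
    then have "h \<otimes> y \<otimes> inv h \<otimes> h = y \<otimes> h" by simp
    then show "h \<otimes> y = y \<otimes> h" using hc y by (simp add: m_assoc)
  qed
next
  assume a: "\<forall>h\<in>H. h \<otimes> y = y \<otimes> h"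
  have "h \<otimes> y \<otimes> inv h = y" if h: "h \<in> H" for h
  proof -
    have hc: "h \<in> carrier G" using h H subgroup.subset by blast
    have "h \<otimes> y \<otimes> inv h = y \<otimes> h \<otimes> inv h" using a h by simp
    then show ?thesis using hc y by (simp add: m_assoc)
  qed
  then show "orb G H y = {y}" using orb_self[OF H y] by (auto simp: orb_def)
qed

end

context group begin

lemma orbit_stab:
  assumes H: "subgroup H G" and y: "y \<in> carrier G"
  shows "card (orb G H y) * card (stab G H y) = card H"
proof -
  let ?phi = "\<lambda>g. \<lambda>h\<in>carrier G. g \<otimes> h \<otimes> inv g"
  have Hs: "H \<subseteq> carrier G" using H subgroup.subset by blast
  have "?phi \<in> hom (G\<lparr>carrier := H\<rparr>) (BijGroup (carrier G))"
    using conjugation_is_hom Hs unfolding hom_def by (auto simp: Pi_def)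
  then interpret A: group_action "G\<lparr>carrier := H\<rparr>" "carrier G" ?phi
    unfolding group_action_def group_hom_def group_hom_axioms_def
    using subgroup_imp_group[OF H] group_BijGroup by blast
  have o: "orbit (G\<lparr>carrier := H\<rparr>) ?phi y = orb G H y"
    using y by (auto simp: orbit_def orb_def)
  have s: "stabilizer (G\<lparr>carrier := H\<rparr>) ?phi y = stab G H y"
  proof -
    have "g \<otimes> y \<otimes> inv g = y \<longleftrightarrow> g \<otimes> y = y \<otimes> g" if g: "g \<in> H" for g
    proof -
      have gc: "g \<in> carrier G" using g Hs by auto
      show ?thesis
      proof
        assume "g \<otimes> y \<otimes> inv g = y"
        then have "g \<otimes> y \<otimes> inv g \<otimes> g = y \<otimes> g" by simp
        then show "g \<otimes> y = y \<otimes> g" using gc y by (simp add: m_assoc)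
      next
        assume "g \<otimes> y = y \<otimes> g"
        then show "g \<otimes> y \<otimes> inv g = y" using gc y by (simp add: m_assoc)
      qed
    qed
    then show ?thesis using y by (auto simp: stabilizer_def stab_def)
  qed
  show ?thesis using A.orbit_stabilizer_theorem[OF y] o s by (simp add: order_def)
qed

lemma stab_subgroup:
  assumes H: "subgroup H G" and y: "y \<in> carrier G"
  shows "subgroup (stab G H y) G"
proof -
  have "stab G H y = fixs G {y} H" by (auto simp: stab_def fixs_def)
  then show ?thesis using fixs_subgroup[OF H] y by auto
qed

lemma union_orbits_dvd:
  assumes H: "subgroup H G"
  shows "finite S \<Longrightarrow> S \<subseteq> carrier G \<Longrightarrow> (\<forall>y\<in>S. orb G H y \<subseteq> S) \<Longrightarrow>
     (\<forall>y\<in>S. r dvd card (orb G H y)) \<Longrightarrow> r dvd card S"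
proof (induction "card S" arbitrary: S rule: less_induct)
  case (less S)
  show ?case
  proof (cases "S = {}")
    case True then show ?thesis by simp
  next
    case False
    then obtain y where yS: "y \<in> S" by blast
    have yc: "y \<in> carrier G" using yS less.prems by auto
    let ?O = "orb G H y"
    have OS: "?O \<subseteq> S" using less.prems yS by auto
    have yO: "y \<in> ?O" using orb_self[OF H yc] .
    let ?T = "S - ?O"
    have fT: "finite ?T" using less.prems by auto
    have cT: "card ?T < card S" using yO yS less.prems(1) by (intro psubset_card_mono) auto
    have closed: "\<forall>z\<in>?T. orb G H z \<subseteq> ?T"
    proof
      fix z assume z: "z \<in> ?T"
      have zc: "z \<in> carrier G" using z less.prems by auto
      have "orb G H z \<inter> ?O = {}"
      proof (rule ccontr)
        assume "orb G H z \<inter> ?O \<noteq> {}"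
        then obtain w where w: "w \<in> orb G H z" "w \<in> ?O" by blast
        have "orb G H w = orb G H z" using orb_trans[OF H zc w(1)] .
        moreover have "orb G H w = ?O" using orb_trans[OF H yc w(2)] .
        ultimately have "z \<in> ?O" using orb_self[OF H zc] by simp
        then show False using z by blast
      qed
      moreover have "orb G H z \<subseteq> S" using less.prems z by auto
      ultimately show "orb G H z \<subseteq> ?T" by blast
    qed
    have "r dvd card ?T" using less.hyps[OF cT fT] less.prems closed by auto
    moreover have "card S = card ?O + card ?T"
      using OS less.prems(1) by (metis card_Diff_subset card_mono finite_subset le_add_diff_inverse)
    moreover have "r dvd card ?O" using less.prems yS by auto
    ultimately show ?thesis by simp
  qed
qed

end

context group begin
lemma fix_count:
  assumes H: "subgroup H G" and fX: "finite W" and Xc: "W \<subseteq> carrier G"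
    and inv: "\<forall>h\<in>H. \<forall>y\<in>W. h \<otimes> y \<otimes> inv h \<in> W"
    and d: "\<forall>y\<in>W. orb G H y \<noteq> {y} \<longrightarrow> r dvd card (orb G H y)"
  shows "r dvd card W - card (fixs G H W)"
proof -
  let ?S = "W - fixs G H W"
  have Fsub: "fixs G H W \<subseteq> W" by (auto simp: fixs_def)
  have nf: "orb G H y \<noteq> {y}" if "y \<in> ?S" for y
    using that orb_single_iff[OF H] Xc by (auto simp: fixs_def)
  have closed: "\<forall>y\<in>?S. orb G H y \<subseteq> ?S"
  proof
    fix y assume y: "y \<in> ?S"
    have yc: "y \<in> carrier G" using y Xc by auto
    have "orb G H y \<subseteq> W" using inv y by (auto simp: orb_def)
    moreover have "z \<notin> fixs G H W" if z: "z \<in> orb G H y" for z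
    proof
      assume zf: "z \<in> fixs G H W"
      have zc: "z \<in> carrier G" using zf Xc by (auto simp: fixs_def)
      have "orb G H z = {z}" using zf orb_single_iff[OF H zc] by (auto simp: fixs_def)
      moreover have "orb G H z = orb G H y" using orb_trans[OF H yc z] .
      ultimately have "orb G H y = {y}" using orb_self[OF H yc] by auto
      then show False using nf y by blast
    qed
    ultimately show "orb G H y \<subseteq> ?S" by blast
  qed
  have "r dvd card ?S"
    using union_orbits_dvd[OF H, of ?S r] fX Xc closed d nf by auto
  then show ?thesis using card_Diff_subset[OF finite_subset[OF Fsub fX] Fsub] by simp
qed

lemma pgroup_orb_dvd:
  assumes H: "subgroup H G" and cH: "card H = q ^ a" and q: "Factorial_Ring.prime q"
    and y: "y \<in> carrier G" and ne: "orb G H y \<noteq> {y}"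
  shows "q dvd card (orb G H y)"
proof -
  have "card (orb G H y) dvd q ^ a" using orbit_stab[OF H y] cH by (metis dvd_triv_left)
  then obtain i where i: "card (orb G H y) = q ^ i" using divides_primepow_nat[OF q] by blast
  have "card (orb G H y) \<noteq> 1"
  proof
    assume "card (orb G H y) = 1"
    then obtain z where "orb G H y = {z}" using card_1_singletonE by blast
    then show False using ne orb_self[OF H y] by auto
  qed
  then have "i \<noteq> 0" using i by auto
  then show ?thesis using i by (simp add: dvd_power)
qed

end

lemma only_p:
  fixes p c :: nat
  assumes p: "Factorial_Ring.prime p" and all: "\<forall>q. Factorial_Ring.prime q \<longrightarrow> q dvd c \<longrightarrow> q = p"
    and c1: "c \<noteq> 1" and c0: "c \<noteq> 0" and lt: "c < p^2"
  shows "c = p"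
proof -
  obtain q where q: "Factorial_Ring.prime q" "q dvd c" using prime_factor_nat[OF c1] by blast
  then have "p dvd c" using all by auto
  then obtain d where d: "c = p * d" by blast
  have p0: "p > 0" using p prime_gt_0_nat by blast
  have "d < p" using lt d p0 by (simp add: power2_eq_square)
  have "d \<noteq> 0" using d c0 by auto
  show ?thesis
  proof (cases "d = 1")
    case True then show ?thesis using d by simp
  next
    case False
    obtain r where r: "Factorial_Ring.prime r" "r dvd d" using prime_factor_nat[OF False] by blast
    then have "r dvd c" using d by simp
    then have "r = p" using all r by auto
    then have "p \<le> d" using r \<open>d \<noteq> 0\<close> by (simp add: dvd_imp_le)
    then show ?thesis using \<open>d < p\<close> by simp
  qed
qed

lemma mult_set:
  fixes p :: nat assumes p0: "p > 0"
  shows "{k \<in> {0..<int (p^2)}. (int p * k) mod int (p^2) = 0} = (\<lambda>j. int p * j) ` {0..<int p}"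
proof
  show "{k \<in> {0..<int (p^2)}. (int p * k) mod int (p^2) = 0} \<subseteq> (\<lambda>j. int p * j) ` {0..<int p}"
  proof
    fix k assume k: "k \<in> {k \<in> {0..<int (p^2)}. (int p * k) mod int (p^2) = 0}"
    then have "int p * int p dvd int p * k" by (auto simp: power2_eq_square)
    then have "int p dvd k" using p0 by simp
    then obtain j where j: "k = int p * j" by blast
    have "0 \<le> j" using k j p0 by (auto simp: zero_le_mult_iff)
    moreover have "j < int p" using k j p0 by (auto simp: power2_eq_square)
    ultimately show "k \<in> (\<lambda>j. int p * j) ` {0..<int p}" using j by auto
  qed
next
  show "(\<lambda>j. int p * j) ` {0..<int p} \<subseteq> {k \<in> {0..<int (p^2)}. (int p * k) mod int (p^2) = 0}"
  proof
    fix k assume "k \<in> (\<lambda>j. int p * j) ` {0..<int p}"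
    then obtain j where j: "k = int p * j" "0 \<le> j" "j < int p" by auto
    have "int p * j < int p * int p" using j p0 by simp
    moreover have "(int p * (int p * j)) mod (int p * int p) = 0" by simp
    ultimately show "k \<in> {k \<in> {0..<int (p^2)}. (int p * k) mod int (p^2) = 0}"
      using j p0 by (auto simp: power2_eq_square)
  qed
qed

lemma card_mult_set:
  fixes p :: nat assumes p0: "p > 0"
  shows "card {k \<in> {0..<int (p^2)}. (int p * k) mod int (p^2) = 0} = p"
proof -
  have "inj_on (\<lambda>j. int p * j) {0..<int p}" using p0 by (auto simp: inj_on_def)
  then show ?thesis using mult_set[OF p0] by (simp add: card_image)
qed

context group begin

lemma conj_pow:
  assumes "h \<in> carrier G" "y \<in> carrier G"
  shows "(h \<otimes> y \<otimes> inv h) [^] (n::nat) = h \<otimes> y [^] n \<otimes> inv h"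
proof (induction n)
  case 0 then show ?case using assms by simp
next
  case (Suc n)
  have "(h \<otimes> y \<otimes> inv h) [^] Suc n = (h \<otimes> y [^] n \<otimes> inv h) \<otimes> (h \<otimes> y \<otimes> inv h)"
    using Suc by simp
  also have "\<dots> = h \<otimes> (y [^] n \<otimes> y) \<otimes> inv h" using assms by (simp add: m_assoc)
  finally show ?case by simp
qed

lemma card_B:
  assumes As: "subgroup A G" and iso: "subgroup_generated G A \<cong> integer_mod_group (p^2)"
    and p0: "p > 0"
  shows "card {y \<in> A. y [^] p = \<one>} = p"
proof -
  obtain f where f: "f \<in> iso (subgroup_generated G A) (integer_mod_group (p^2))"
    using iso unfolding is_iso_def by blast
  have cs: "carrier (subgroup_generated G A) = A" using subgroup.carrier_subgroup_generated_subgroup[OF As] .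
  have hom: "f \<in> hom (subgroup_generated G A) (integer_mod_group (p^2))" using f by (simp add: iso_def)
  have bij: "bij_betw f A {0..<int (p^2)}" using f cs p0 by (simp add: iso_def carrier_integer_mod_group)
  have one: "f \<one> = 0" using hom_one[OF hom] by simp
  have eq: "y [^] p = \<one> \<longleftrightarrow> (int p * f y) mod int (p^2) = 0" if y: "y \<in> A" for y
  proof -
    have yc: "y \<in> carrier G" using y As subgroup.subset by blast
    have "f (y [^] p) = (int p * f y) mod int (p^2)"
      using hom_nat_pow[OF hom, of y p] y cs by (simp add: pow_subgroup_generated)
    moreover have "y [^] p \<in> A"
    proof -
      have "y [^]\<^bsub>subgroup_generated G A\<^esub> p \<in> carrier (subgroup_generated G A)"
        using y cs by (intro monoid.nat_pow_closed group.is_monoid) simp_all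
      then show ?thesis using cs by (simp add: pow_subgroup_generated)
    qed
    moreover have "\<one> \<in> A" using subgroup.one_closed[OF As] .
    ultimately show ?thesis using bij y one unfolding bij_betw_def inj_on_def by metis
  qed
  then have e1: "{y \<in> A. y [^] p = \<one>} = {y \<in> A. (int p * f y) mod int (p^2) = 0}" by auto
  have g2: "f ` {y \<in> A. (int p * f y) mod int (p^2) = 0} = {k \<in> f ` A. (int p * k) mod int (p^2) = 0}"
    by (auto simp: image_iff)
  have fA: "f ` A = {0..<int (p^2)}" using bij by (simp add: bij_betw_def)
  have inj: "inj_on f {y \<in> A. (int p * f y) mod int (p^2) = 0}"
    using bij unfolding bij_betw_def by (auto intro: inj_on_subset)
  have "card {y \<in> A. y [^] p = \<one>} = card (f ` {y \<in> A. (int p * f y) mod int (p^2) = 0})"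
    using e1 card_image[OF inj] by simp
  also have "\<dots> = card {k \<in> {0..<int (p^2)}. (int p * k) mod int (p^2) = 0}"
    by (simp only: g2 fA)
  also have "\<dots> = p" using card_mult_set[OF p0] .
  finally show ?thesis .
qed

end

lemma sq_minus_one: "(p::nat)^2 - 1 = (p - 1) * (p + 1)"
  by (cases p) (auto simp: power2_eq_square algebra_simps)

lemma (in group) main_aux:
  fixes p :: nat
  assumes "finite (carrier G)" and "Factorial_Ring.prime p"
    and "\<not> commutator_subgroup G \<subseteq> group_center G"
    and "(subgroup_generated G (commutator_subgroup G) \<cong> integer_mod_group (p^2)
            \<and> gcd (p - 1) (order G) = 1)
         \<or> (subgroup_generated G (commutator_subgroup G)
               \<cong> integer_mod_group p \<times>\<times> integer_mod_group p
            \<and> gcd (p^2 - 1) (order G) = 1)"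
  shows "order (G Mod centralizer G (commutator_subgroup G)) = p
    \<and> card (commutator_subgroup G \<inter> group_center G) = p
    \<and> (\<forall>x \<in> commutator_subgroup G - group_center G. card (conj_class G x) = p)"
proof -
  define A where "A = derived G (carrier G)"
  define C where "C = centralizer G A"
  have An: "A \<lhd> G" unfolding A_def by (rule derived_self_is_normal)
  have As: "subgroup A G" using normal_imp_subgroup[OF An] .
  have Asub: "A \<subseteq> carrier G" using subgroup.subset[OF As] .
  have fA: "finite A" using finite_subset[OF Asub assms(1)] .
  have Ainv: "\<forall>h\<in>carrier G. \<forall>y\<in>A. h \<otimes> y \<otimes> inv h \<in> A"
    using normal.inv_op_closed2[OF An] by blast
  have p2: "p \<ge> 2" using prime_ge_2_nat[OF assms(2)] .
  have cs: "carrier (subgroup_generated G A) = A" using subgroup.carrier_subgroup_generated_subgroup[OF As] .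
  have cardA: "card A = p^2"
    using assms(4)
  proof
    assume "subgroup_generated G (commutator_subgroup G) \<cong> integer_mod_group (p^2) \<and> gcd (p - 1) (order G) = 1"
    then have "card A = card (carrier (integer_mod_group (p^2)))" using iso_same_card cs A_def by metis
    then show ?thesis using p2 by (simp add: carrier_integer_mod_group del: of_nat_power add: of_nat_power[symmetric])
  next
    assume "subgroup_generated G (commutator_subgroup G) \<cong> integer_mod_group p \<times>\<times> integer_mod_group p
            \<and> gcd (p^2 - 1) (order G) = 1"
    then have "card A = card (carrier (integer_mod_group p \<times>\<times> integer_mod_group p))" using iso_same_card cs A_def by metis
    then show ?thesis using p2 by (simp add: carrier_integer_mod_group card_cartesian_product power2_eq_square)
  qed
  have Ceq: "C = fixs G A (carrier G)" unfolding C_def centralizer_def fixs_def by auto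
  have Cs: "subgroup C G" unfolding Ceq using fixs_subgroup[OF subgroup_self Asub] .
  have fC: "finite C" using finite_subset[OF subgroup.subset[OF Cs] assms(1)] .
  have cC: "card C > 0" using fC subgroup.one_closed[OF Cs] card_gt_0_iff by blast
  define m where "m = card (rcosets C)"
  have lag: "m * card C = order G" unfolding m_def using lagrange[OF Cs] .
  have mG: "m dvd order G" using lag by (metis dvd_triv_left)
  have oG: "order G > 0" using assms(1) order_gt_0_iff_finite by blast
  have nq1: "\<not> q dvd p - 1" if q: "Factorial_Ring.prime q" "q dvd order G" for q
    using assms(4)
  proof
    assume h: "subgroup_generated G (commutator_subgroup G) \<cong> integer_mod_group (p^2) \<and> gcd (p - 1) (order G) = 1"
    show ?thesis
    proof
      assume "q dvd p - 1"
      then have "q dvd gcd (p - 1) (order G)" using q by (intro gcd_greatest)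
      then have "q dvd 1" using h by metis
      then show False using q(1) by simp
    qed
  next
    assume h: "subgroup_generated G (commutator_subgroup G) \<cong> integer_mod_group p \<times>\<times> integer_mod_group p
            \<and> gcd (p^2 - 1) (order G) = 1"
    show ?thesis
    proof
      assume "q dvd p - 1"
      then have "q dvd p^2 - 1" unfolding sq_minus_one by simp
      then have "q dvd gcd (p^2 - 1) (order G)" using q by (intro gcd_greatest)
      then have "q dvd 1" using h by metis
      then show False using q(1) by simp
    qed
  qed
  have only_p_m: "\<forall>q. Factorial_Ring.prime q \<longrightarrow> q dvd m \<longrightarrow> q = p"
  proof (intro allI impI, rule ccontr)
    fix q assume q: "Factorial_Ring.prime q" and qm: "q dvd m" and qp: "q \<noteq> p"
    have qG: "q dvd order G" using qm mG by (rule dvd_trans)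
    define a where "a = multiplicity q (order G)"
    have "q ^ a dvd order G" unfolding a_def by (rule multiplicity_dvd)
    then obtain k where k: "order G = q ^ a * k" by blast
    obtain Q where Q: "subgroup Q G" "card Q = q ^ a"
      using sylow_thm[OF q is_group k assms(1)] by blast
    have Qsub: "Q \<subseteq> carrier G" using subgroup.subset[OF Q(1)] .
    have "\<not> Q \<subseteq> C"
    proof
      assume "Q \<subseteq> C"
      then have "card Q dvd card C" using sub_card_dvd[OF Q(1) Cs] by blast
      then have "q * q ^ a dvd m * card C" using qm by (simp add: Q(2) mult_dvd_mono)
      then have "q ^ Suc a dvd order G" using lag by simp
      moreover have "order G \<noteq> 0" "\<not> is_unit q" using oG q by (auto simp: prime_def)
      ultimately have "Suc a \<le> a" unfolding a_def using multiplicity_geI by blast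
      then show False by simp
    qed
    then obtain g where g: "g \<in> Q" "g \<notin> C" by blast
    have gc: "g \<in> carrier G" using g Qsub by blast
    obtain y where y: "y \<in> A" "g \<otimes> y \<noteq> y \<otimes> g" using g gc unfolding C_def centralizer_def by blast
    define F where "F = fixs G Q A"
    have Fs: "subgroup F G" unfolding F_def using fixs_subgroup[OF As Qsub] .
    have FA: "F \<subseteq> A" unfolding F_def fixs_def by auto
    have "y \<notin> F" using y g unfolding F_def fixs_def by auto
    then have "F \<subset> A" using FA y by blast
    then have Flt: "card F < p^2" using psubset_card_mono[OF fA] cardA by metis
    have "card F dvd p^2" using sub_card_dvd[OF Fs As FA] cardA by simp
    then obtain i where i: "i \<le> 2" "card F = p ^ i" using divides_primepow_nat[OF assms(2)] by blast
    have fcA: "q dvd card A - card F"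
      unfolding F_def
      using fix_count[OF Q(1) fA Asub] Ainv Qsub pgroup_orb_dvd[OF Q q] Asub by blast
    have "i \<noteq> 2" using i Flt by auto
    then consider "i = 0" | "i = 1" using i by linarith
    then show False
    proof cases
      case 2
      then have "q dvd p * (p - 1)" using fcA cardA i by (simp add: power2_eq_square right_diff_distrib')
      then have "q dvd p \<or> q dvd p - 1" using q prime_dvd_mult_iff by blast
      then show False
      proof
        assume "q dvd p" then show False using primes_dvd_imp_eq[OF q assms(2)] qp by blast
      next
        assume "q dvd p - 1" then show False using nq1[OF q qG] by blast
      qed
    next
      case 1
      then have cF: "card F = 1" using i by simp
      have fq: "q dvd p^2 - 1" using fcA cardA cF by simp
      show False using assms(4)
      proof
        assume h: "subgroup_generated G (commutator_subgroup G) \<cong> integer_mod_group p \<times>\<times> integer_mod_group p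
            \<and> gcd (p^2 - 1) (order G) = 1"
        then have "q dvd gcd (p^2 - 1) (order G)" using fq qG by (intro gcd_greatest)
        then have "q dvd 1" using h by metis
        then show False using q by simp
      next
        assume h: "subgroup_generated G (commutator_subgroup G) \<cong> integer_mod_group (p^2) \<and> gcd (p - 1) (order G) = 1"
        define B where "B = {y \<in> A. y [^] p = \<one>}"
        have cB: "card B = p" unfolding B_def using card_B[OF As] h A_def p2 by simp
        have BA: "B \<subseteq> A" unfolding B_def by auto
        have fB: "finite B" using finite_subset[OF BA fA] .
        have Binv: "\<forall>h\<in>Q. \<forall>y\<in>B. h \<otimes> y \<otimes> inv h \<in> B"
        proof (intro ballI)
          fix h y assume h: "h \<in> Q" and y: "y \<in> B"
          have hc: "h \<in> carrier G" using h Qsub by blast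
          have yc: "y \<in> carrier G" using y BA Asub by blast
          have "(h \<otimes> y \<otimes> inv h) [^] p = \<one>" using conj_pow[OF hc yc] y hc by (simp add: B_def)
          then show "h \<otimes> y \<otimes> inv h \<in> B" using Ainv hc y BA unfolding B_def by auto
        qed
        have one1: "\<one> \<in> F" using subgroup.one_closed[OF Fs] .
        have F1: "F = {\<one>}" using cF one1 by (metis card_1_singletonE singletonD)
        have "fixs G Q B = {\<one>}"
        proof
          show "fixs G Q B \<subseteq> {\<one>}" using F1 BA unfolding F_def fixs_def by auto
          show "{\<one>} \<subseteq> fixs G Q B" using one1 unfolding F_def fixs_def B_def by auto
        qed
        moreover have "q dvd card B - card (fixs G Q B)"
        proof (rule fix_count[OF Q(1) fB _ Binv])
          show "B \<subseteq> carrier G" using BA Asub by blast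
          show "\<forall>y\<in>B. orb G Q y \<noteq> {y} \<longrightarrow> q dvd card (orb G Q y)"
            using pgroup_orb_dvd[OF Q q] BA Asub by blast
        qed
        ultimately have "q dvd p - 1" using cB by simp
        then show False using nq1[OF q qG] by blast
      qed
    qed
  qed
  define N where "N = A \<inter> group_center G"
  have Neq: "N = fixs G (carrier G) A" unfolding N_def group_center_def fixs_def using Asub by auto
  have Ns: "subgroup N G" unfolding Neq using fixs_subgroup[OF As] by blast
  have NA: "N \<subseteq> A" unfolding N_def by auto
  have orb_dvd_m: "card (orb G (carrier G) y) dvd m" if y: "y \<in> A" for y
  proof -
    have yc: "y \<in> carrier G" using y Asub by blast
    have os: "card (orb G (carrier G) y) * card (stab G (carrier G) y) = order G"
      using orbit_stab[OF subgroup_self yc] by (simp add: order_def)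
    have "C \<subseteq> stab G (carrier G) y" using y Asub unfolding C_def centralizer_def stab_def by auto
    then have "card C dvd card (stab G (carrier G) y)"
      using sub_card_dvd[OF Cs stab_subgroup[OF subgroup_self yc]] by blast
    then obtain j where j: "card (stab G (carrier G) y) = card C * j" by blast
    then have "(card (orb G (carrier G) y) * j) * card C = m * card C" using os lag by (simp add: ac_simps)
    then have "card (orb G (carrier G) y) * j = m" using cC by simp
    then show ?thesis by (metis dvd_triv_left)
  qed
  have orb_fin: "finite (orb G (carrier G) y)" for y
    unfolding orb_def using assms(1) by simp
  have orb_ne1: "card (orb G (carrier G) y) \<noteq> 1" if y: "y \<in> A" "orb G (carrier G) y \<noteq> {y}" for y
  proof
    assume "card (orb G (carrier G) y) = 1"
    then obtain z where "orb G (carrier G) y = {z}" using card_1_singletonE by blast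
    then show False using y orb_self[OF subgroup_self, of y] Asub by auto
  qed
  have orb_primes: "\<forall>r. Factorial_Ring.prime r \<longrightarrow> r dvd card (orb G (carrier G) y) \<longrightarrow> r = p"
    if y: "y \<in> A" for y
    using only_p_m orb_dvd_m[OF y] dvd_trans by blast
  have pdvd: "p dvd card (orb G (carrier G) y)" if y: "y \<in> A" "orb G (carrier G) y \<noteq> {y}" for y
  proof -
    obtain r where r: "Factorial_Ring.prime r" "r dvd card (orb G (carrier G) y)"
      using prime_factor_nat[OF orb_ne1[OF y]] by blast
    then show ?thesis using orb_primes[OF y(1)] by auto
  qed
  have pAN: "p dvd card A - card N"
    unfolding Neq using fix_count[OF subgroup_self fA Asub] Ainv pdvd by blast
  have NneA: "N \<noteq> A" using assms(3) unfolding N_def A_def by blast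
  then have "N \<subset> A" using NA by blast
  then have Nlt: "card N < p^2" using psubset_card_mono[OF fA] cardA by metis
  have "card N dvd p^2" using sub_card_dvd[OF Ns As NA] cardA by simp
  then obtain i where i: "i \<le> 2" "card N = p ^ i" using divides_primepow_nat[OF assms(2)] by blast
  have "i \<noteq> 2" using i Nlt by auto
  moreover have "i \<noteq> 0"
  proof
    assume "i = 0"
    then have "p dvd p^2 - 1" using pAN cardA i by simp
    moreover have "p dvd p^2" by simp
    ultimately have "p dvd p^2 - (p^2 - 1)" using dvd_diff_nat by blast
    moreover have "p^2 - (p^2 - 1) = 1" using p2 by simp
    ultimately show False using assms(2) by simp
  qed
  ultimately have "i = 1" using i by linarith
  then have cN: "card N = p" using i by simp
  have orb_notN: "orb G (carrier G) x \<subseteq> A - N" if x: "x \<in> A" "x \<notin> N" for x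
  proof
    fix z assume z: "z \<in> orb G (carrier G) x"
    have xc: "x \<in> carrier G" using x Asub by blast
    have zA: "z \<in> A" using z Ainv x unfolding orb_def by auto
    have "z \<notin> N"
    proof
      assume zN: "z \<in> N"
      have zc: "z \<in> carrier G" using zA Asub by blast
      have "orb G (carrier G) z = {z}" using zN orb_single_iff[OF subgroup_self zc] unfolding Neq fixs_def by auto
      moreover have "orb G (carrier G) z = orb G (carrier G) x" using orb_trans[OF subgroup_self xc z] .
      ultimately have "x = z" using orb_self[OF subgroup_self xc] by auto
      then show False using x zN by simp
    qed
    then show "z \<in> A - N" using zA by blast
  qed
  have conj: "card (orb G (carrier G) x) = p" if x: "x \<in> A" "x \<notin> N" for x
  proof -
    have xc: "x \<in> carrier G" using x Asub by blast
    have ne: "orb G (carrier G) x \<noteq> {x}"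
    proof
      assume "orb G (carrier G) x = {x}"
      then have "x \<in> fixs G (carrier G) A" using orb_single_iff[OF subgroup_self xc] x unfolding fixs_def by auto
      then show False using x Neq by simp
    qed
    have "card (orb G (carrier G) x) \<le> card (A - N)" using orb_notN[OF x] fA by (intro card_mono) auto
    also have "\<dots> = p^2 - p" using card_Diff_subset[OF finite_subset[OF NA fA] NA] cardA cN by simp
    finally have le: "card (orb G (carrier G) x) \<le> p^2 - p" .
    have "p^2 - p < p^2" using p2 by (intro diff_less) (auto simp: power2_eq_square)
    then have lt: "card (orb G (carrier G) x) < p^2" using le by linarith
    have "card (orb G (carrier G) x) \<noteq> 0" using orb_fin orb_self[OF subgroup_self xc] by (metis card_0_eq empty_iff)
    then show ?thesis using only_p[OF assms(2) orb_primes[OF x(1)] orb_ne1[OF x(1) ne] _ lt] by blast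
  qed
  obtain x where x: "x \<in> A" "x \<notin> N" using NneA NA by blast
  have xc: "x \<in> carrier G" using x Asub by blast
  have stabC: "stab G (carrier G) x = C"
  proof
    show "C \<subseteq> stab G (carrier G) x" using x Asub unfolding C_def centralizer_def stab_def by auto
  next
    show "stab G (carrier G) x \<subseteq> C"
    proof
      fix g assume g: "g \<in> stab G (carrier G) x"
      have gc: "g \<in> carrier G" using g unfolding stab_def by auto
      define S where "S = fixs G {g} A"
      have Ss: "subgroup S G" unfolding S_def using fixs_subgroup[OF As] gc by blast
      have SA: "S \<subseteq> A" unfolding S_def fixs_def by auto
      have NS: "N \<subseteq> S" unfolding S_def Neq fixs_def using gc by auto
      have xS: "x \<in> S" unfolding S_def fixs_def using g x unfolding stab_def by auto
      have "insert x N \<subseteq> S" using NS xS by blast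
      then have "card (insert x N) \<le> card S" using finite_subset[OF SA fA] by (rule card_mono[rotated])
      moreover have "card (insert x N) = p + 1" using x cN finite_subset[OF NA fA] by simp
      ultimately have Sge: "card S > p" by simp
      have "card S dvd p^2" using sub_card_dvd[OF Ss As SA] cardA by simp
      then obtain k where k: "k \<le> 2" "card S = p ^ k" using divides_primepow_nat[OF assms(2)] by blast
      have "k = 2"
      proof (rule ccontr)
        assume "k \<noteq> 2"
        then have "k \<le> 1" using k by simp
        then have "p ^ k \<le> p ^ 1" using p2 by (intro power_increasing) auto
        then show False using Sge k by simp
      qed
      then have "card S = card A" using k cardA by simp
      then have "S = A" using card_subset_eq[OF fA SA] by simp
      then show "g \<in> C" using gc unfolding C_def centralizer_def S_def fixs_def by auto
    qed
  qed
  have "card (orb G (carrier G) x) * card C = order G"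
    using orbit_stab[OF subgroup_self xc] stabC by (simp add: order_def)
  then have "p * card C = m * card C" using conj[OF x] lag by simp
  then have mp: "m = p" using cC by simp
  have "order (G Mod C) = m" unfolding m_def order_def FactGroup_def by simp
  moreover have "\<forall>x\<in>A - group_center G. card (conj_class G x) = p"
  proof
    fix y assume y: "y \<in> A - group_center G"
    then have "y \<in> A" "y \<notin> N" unfolding N_def by auto
    moreover have "conj_class G y = orb G (carrier G) y" unfolding conj_class_def orb_def by simp
    ultimately show "card (conj_class G y) = p" using conj by simp
  qed
  ultimately show ?thesis using mp cN unfolding A_def C_def N_def by simp
qed

theorem lemma3p2:
  fixes G :: "('a, 'b) monoid_scheme" and p :: nat
  assumes "group G" and "finite (carrier G)" and "Factorial_Ring.prime p"
    and "\<not> commutator_subgroup G \<subseteq> group_center G"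
    and "(subgroup_generated G (commutator_subgroup G) \<cong> integer_mod_group (p^2)
            \<and> gcd (p - 1) (order G) = 1)
         \<or> (subgroup_generated G (commutator_subgroup G)
               \<cong> integer_mod_group p \<times>\<times> integer_mod_group p
            \<and> gcd (p^2 - 1) (order G) = 1)"
  shows "order (G Mod centralizer G (commutator_subgroup G)) = p
    \<and> card (commutator_subgroup G \<inter> group_center G) = p
    \<and> (\<forall>x \<in> commutator_subgroup G - group_center G. card (conj_class G x) = p)"
  using group.main_aux[OF assms(1) assms(2-5)] by blast

end
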